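(* There exist a Fuchsian group $\Gamma$ and two subsets $F_1, F_2 \subset \mathbb{H}$, each of which is a fundamental domain of $\Gamma$ in the following sense, such that $\mu(F_1) \neq \mu(F_2)$. A subset $F \subset \mathbb{H}$ is a fundamental domain of $\Gamma$ (in this sense) if: (i$'$) $F$ is open and connected; (ii) no two distinct points of $F$ are equivalent under $\Gamma$; (iii) for every $z \in \mathbb{H}$ there exists some $M \in \Gamma$ such that $Mz \in \overline{F}$, where $\overline{F}$ denotes the closure of $F$ in $\mathbb{H}$.
   Context: $\mathbb{H} = \{ z \in \mathbb{C} : \mathrm{Im}\, z > 0\}$ is the upper half-plane. A Fuchsian group is a discrete subgroup $\Gamma$ of $\mathrm{PSL}_2(\mathbb{R})$, acting on $\mathbb{H}$ by $z \mapsto Mz = \frac{az+b}{cz+d}$ for $M = \pm\begin{pmatrix} a & b \\ c & d\end{pmatrix}$. Two points $z, w \in \mathbb{H}$ are equivalent under $\Gamma$ if $w = Mz$ for some $M \in \Gamma$. $\mu$ denotes the hyperbolic area measure on $\mathbb{H}$, $d\mu = y^{-2}\,dx\,dy$ (for $z = x+iy$). *)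

theory Defs
  imports "HOL-Analysis.Analysis"
begin

definition upper_half_plane :: "complex set" where
  "upper_half_plane = {z. Im z > 0}"

text \<open>SL_2(R) as real 2x2 matrices of determinant 1. An element of PSL_2(R) is
  a pair of matrices plus/minus A; a subgroup of PSL_2(R) corresponds exactly to a
  subgroup of SL_2(R) containing minus the identity (its preimage).\<close>
definition SL2 :: "(real^2^2) set" where
  "SL2 = {A. det A = 1}"

definition mobius :: "real^2^2 \<Rightarrow> complex \<Rightarrow> complex" where
  "mobius A z = (complex_of_real (A$1$1) * z + complex_of_real (A$1$2)) /
                (complex_of_real (A$2$1) * z + complex_of_real (A$2$2))"

definition fuchsian :: "(real^2^2) set \<Rightarrow> bool" where
  "fuchsian G \<longleftrightarrow> G \<subseteq> SL2 \<and> mat 1 \<in> G \<and> - mat 1 \<in> G \<and>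
     (\<forall>A\<in>G. \<forall>B\<in>G. A ** B \<in> G) \<and> (\<forall>A\<in>G. matrix_inv A \<in> G) \<and>
     (\<forall>A\<in>G. \<exists>e>0. \<forall>B\<in>G. dist B A < e \<longrightarrow> B = A)"

definition hyp_area :: "complex set \<Rightarrow> ennreal" where
  "hyp_area F = (\<integral>\<^sup>+ z. ennreal (1 / (Im z)\<^sup>2) * indicator F z \<partial>lborel)"

definition fundamental_domain :: "(real^2^2) set \<Rightarrow> complex set \<Rightarrow> bool" where
  "fundamental_domain G F \<longleftrightarrow>
     F \<subseteq> upper_half_plane \<and> open F \<and> connected F \<and>
     (\<forall>z\<in>F. \<forall>w\<in>F. (\<exists>M\<in>G. w = mobius M z) \<longrightarrow> z = w) \<and>
     (\<forall>z\<in>upper_half_plane. \<exists>M\<in>G. mobius M z \<in> closure F \<inter> upper_half_plane)"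

end

theory Submission
  imports Defs
begin

definition G0 :: "(real^2^2) set" where "G0 = {mat 1, - mat 1}"

lemma mobius_G0: "M \<in> G0 \<Longrightarrow> mobius M z = z"
  by (auto simp: G0_def mobius_def mat_def)

lemma neg_mul: "(- mat 1 :: real^2^2) ** A = - A" "A ** (- mat 1 :: real^2^2) = - A"
  by (simp_all add: vec_eq_iff matrix_matrix_mult_def mat_def sum_2 forall_2)

lemma fuchsian_G0: "fuchsian G0"
proof -
  have inv1: "matrix_inv (mat 1 :: real^2^2) = mat 1"
    unfolding matrix_inv_def
    by (rule someI2[where a="mat 1"]) (auto simp: matrix_mul_lid matrix_mul_rid)
  have inv2: "matrix_inv (- mat 1 :: real^2^2) = - mat 1"
    unfolding matrix_inv_def
    by (rule someI2[where a="- mat 1"]) (auto simp: neg_mul matrix_mul_lid, metis minus_minus)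
  have d: "dist (mat 1 :: real^2^2) (- mat 1) \<ge> 1"
  proof -
    have "\<bar>(mat 1 - (- mat 1) :: real^2^2) $ 1 $ 1\<bar> \<le> norm ((mat 1 - (- mat 1) :: real^2^2) $ 1)"
      by (rule component_le_norm_cart)
    also have "\<dots> \<le> norm (mat 1 - (- mat 1) :: real^2^2)" by (rule Finite_Cartesian_Product.norm_nth_le)
    finally show ?thesis by (simp add: dist_norm mat_def)
  qed
  have dets: "det (mat 1 :: real^2^2) = 1" "det (- mat 1 :: real^2^2) = 1"
    by (simp_all add: det_2 mat_def)
  show ?thesis unfolding fuchsian_def
  proof (intro conjI ballI)
    show "G0 \<subseteq> SL2" using dets by (auto simp: G0_def SL2_def)
  next
    fix A B assume "A \<in> G0" "B \<in> G0" thus "A ** B \<in> G0"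
      by (auto simp: G0_def neg_mul matrix_mul_lid)
  next
    fix A assume "A \<in> G0" thus "matrix_inv A \<in> G0" by (auto simp: G0_def inv1 inv2)
  next
    fix A assume "A \<in> G0"
    show "\<exists>e>0. \<forall>B\<in>G0. dist B A < e \<longrightarrow> B = A"
      using \<open>A \<in> G0\<close> d by (intro exI[of _ 1]) (auto simp: G0_def dist_commute)
  qed (auto simp: G0_def)
qed


abbreviation hm :: "complex measure" where
  "hm \<equiv> density lborel (\<lambda>z. ennreal (1 / (Im z)\<^sup>2))"

lemma hyp_area_eq: "F \<in> sets borel \<Longrightarrow> hyp_area F = emeasure hm F"
  unfolding hyp_area_def by (subst emeasure_density) auto

lemma lborel_box_complex: "a \<le> b \<Longrightarrow> c \<le> d \<Longrightarrow>
   emeasure lborel (box (Complex a c) (Complex b d)) = ennreal ((b-a)*(d-c))"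
  by (simp add: emeasure_lborel_box_eq Basis_complex_def)

lemma box_bound:
  assumes "0 < c0" "c0 \<le> c" "a \<le> b" "c \<le> d"
  shows "emeasure hm (box (Complex a c) (Complex b d)) \<le> ennreal ((b-a)*(d-c)/c0^2)"
proof -
  let ?B = "box (Complex a c) (Complex b d)"
  have "emeasure hm ?B = (\<integral>\<^sup>+ z. ennreal (1 / (Im z)\<^sup>2) * indicator ?B z \<partial>lborel)"
    by (subst emeasure_density) auto
  also have "\<dots> \<le> (\<integral>\<^sup>+ z. ennreal (1 / c0^2) * indicator ?B z \<partial>lborel)"
  proof (rule nn_integral_mono)
    fix z show "ennreal (1 / (Im z)\<^sup>2) * indicator ?B z \<le> ennreal (1 / c0^2) * indicator ?B z"
    proof (cases "z \<in> ?B")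
      case True
      hence "Im z > c0" using assms by (auto simp: in_box_complex_iff)
      hence "1 / (Im z)\<^sup>2 \<le> 1 / c0^2" using assms
        by (intro divide_left_mono power_mono) auto
      thus ?thesis using True by (simp add: ennreal_leI)
    qed simp
  qed
  also have "\<dots> = ennreal (1 / c0^2) * ennreal ((b-a)*(d-c))"
    using assms by (simp add: nn_integral_cmult_indicator lborel_box_complex)
  also have "\<dots> = ennreal ((b-a)*(d-c)/c0^2)"
    using assms by (simp add: ennreal_mult'[symmetric])
  finally show ?thesis .
qed

lemma H_lower: assumes "0 < t" shows "ennreal (1/(4*t)) \<le> hyp_area upper_half_plane"
proof -
  let ?B = "box (Complex 0 t) (Complex 1 (2*t))"
  have "ennreal (1/(4*t)) = ennreal (1/(4*t^2)) * ennreal ((1-0)*(2*t-t))"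
    using assms by (simp add: ennreal_mult'[symmetric] power2_eq_square)
  also have "\<dots> = (\<integral>\<^sup>+ z. ennreal (1/(4*t^2)) * indicator ?B z \<partial>lborel)"
    using assms by (simp add: nn_integral_cmult_indicator lborel_box_complex)
  also have "\<dots> \<le> hyp_area upper_half_plane"
    unfolding hyp_area_def
  proof (rule nn_integral_mono)
    fix z show "ennreal (1/(4*t^2)) * indicator ?B z \<le> ennreal (1 / (Im z)\<^sup>2) * indicator upper_half_plane z"
    proof (cases "z \<in> ?B")
      case True
      hence z: "t < Im z" "Im z < 2*t" using assms by (auto simp: in_box_complex_iff)
      hence "(Im z)^2 \<le> (2*t)^2" using assms by (intro power_mono) auto
      hence "(Im z)^2 \<le> 4*t^2" by (simp add: power_mult_distrib)
      hence "1/(4*t^2) \<le> 1 / (Im z)\<^sup>2" using z assms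
        by (intro divide_left_mono) auto
      moreover have "z \<in> upper_half_plane" using z assms by (simp add: upper_half_plane_def)
      ultimately show ?thesis using True by (simp add: ennreal_leI)
    qed simp
  qed
  finally show ?thesis .
qed

lemma H_infinite: "hyp_area upper_half_plane = top"
proof (rule ccontr)
  assume "hyp_area upper_half_plane \<noteq> top"
  then obtain r where r: "hyp_area upper_half_plane = ennreal r" "r \<ge> 0"
    by (cases "hyp_area upper_half_plane") auto
  define t where "t = 1 / (4*(r+1))"
  have t: "t > 0" using r by (simp add: t_def)
  have "ennreal (1/(4*t)) \<le> ennreal r" using H_lower[OF t] r by simp
  hence "1/(4*t) \<le> r" using r by (simp add: ennreal_le_iff)
  moreover have "1/(4*t) = r + 1" using r by (simp add: t_def)
  ultimately show False by simp
qed


definition Dq :: "complex set" where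
  "Dq = {z. Re z \<in> \<rat> \<and> Im z \<in> \<rat> \<and> 0 < Im z}"
definition qn :: "nat \<Rightarrow> complex" where "qn = from_nat_into Dq"
definition mm :: "nat \<Rightarrow> real" where "mm n = min 1 (Im (qn n))"
definition dl :: "nat \<Rightarrow> real" where
  "dl n = (mm n)^2 / (8 * (\<bar>Re (qn n)\<bar> + \<bar>Im (qn n)\<bar> + 3) * 2^n)"
definition Rh :: "nat \<Rightarrow> complex set" where
  "Rh n = box (Complex (min 0 (Re (qn n)) - dl n) (1 - dl n)) (Complex (max 0 (Re (qn n)) + dl n) (1 + dl n))"
definition Rv :: "nat \<Rightarrow> complex set" where
  "Rv n = box (Complex (Re (qn n) - dl n) (mm n - dl n)) (Complex (Re (qn n) + dl n) (max 1 (Im (qn n)) + dl n))"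
definition F2 :: "complex set" where "F2 = (\<Union>n. Rh n \<union> Rv n)"

lemma Dq_ne: "Dq \<noteq> {}"
proof -
  have "\<i> \<in> Dq" by (simp add: Dq_def)
  thus ?thesis by blast
qed

lemma Dq_countable: "countable Dq"
proof -
  have "Dq \<subseteq> (\<lambda>(a,b). Complex a b) ` (\<rat> \<times> \<rat>)"
    by (auto simp: Dq_def image_iff) (metis complex_surj)
  moreover have "countable ((\<lambda>(a,b). Complex a b) ` (\<rat> \<times> \<rat>))"
    by (intro countable_image countable_SIGMA countable_rat)
  ultimately show ?thesis by (rule countable_subset)
qed

lemma range_qn: "range qn = Dq"
  unfolding qn_def using Dq_ne Dq_countable by simp

lemma qn_im: "Im (qn n) > 0"
  using from_nat_into[OF Dq_ne, of n] by (simp add: qn_def Dq_def)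

lemma mm_props: "0 < mm n" "mm n \<le> 1" "mm n \<le> Im (qn n)"
  using qn_im[of n] by (auto simp: mm_def)

lemma dl_props: "0 < dl n" "dl n \<le> mm n / 2"
proof -
  let ?K = "\<bar>Re (qn n)\<bar> + \<bar>Im (qn n)\<bar> + 3"
  have m: "0 < mm n" "mm n \<le> 1" using mm_props by auto
  have K: "?K \<ge> 3" by simp
  have p: "(1::real) \<le> 2^n" by simp
  show "0 < dl n" unfolding dl_def using m K by (intro divide_pos_pos) auto
  have a: "8 \<le> 8 * ?K * 2^n"
  proof -
    have "1 * 1 \<le> ?K * 2^n" using K p by (intro mult_mono) auto
    hence "8 * 1 \<le> 8 * (?K * 2^n)" by (intro mult_left_mono) auto
    thus ?thesis by (simp only: mult.assoc)
  qed
  have "dl n \<le> (mm n)^2 / 8" unfolding dl_def using m a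
    by (intro divide_left_mono) auto
  also have "\<dots> \<le> mm n / 2"
  proof -
    have "(mm n)^2 \<le> mm n" using m unfolding power2_eq_square
      by (intro mult_left_le_one_le) auto
    thus ?thesis using m by linarith
  qed
  finally show "dl n \<le> mm n / 2" .
qed

lemma area_arith:
  assumes "A \<le> \<bar>Re (qn n)\<bar> + \<bar>Im (qn n)\<bar> + 3" "0 \<le> A"
  shows "A * (2 * dl n) / (mm n / 2)^2 \<le> (1/2)^n"
proof -
  let ?K = "\<bar>Re (qn n)\<bar> + \<bar>Im (qn n)\<bar> + 3"
  have m: "0 < mm n" using mm_props by auto
  have K: "?K > 0" by simp
  have "A * (2 * dl n) / (mm n / 2)^2 = A * (8 * dl n) / (mm n)^2"
    by (simp add: power2_eq_square field_simps)
  also have "\<dots> \<le> ?K * (8 * dl n) / (mm n)^2"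
    using assms dl_props(1)[of n] m by (intro divide_right_mono mult_right_mono) auto
  also have "\<dots> = (1/2)^n"
  proof -
    have g: "\<And>K p m. K>0 \<Longrightarrow> m>0 \<Longrightarrow> (p::real)>0 \<Longrightarrow> K * (8 * (m^2/(8*K*p))) / m^2 = 1/p"
      by (simp add: field_simps)
    have "?K * (8 * dl n) / (mm n)^2 = 1 / 2^n"
      unfolding dl_def by (rule g) (use m K in auto)
    thus ?thesis by (simp only: power_one_over)
  qed
  finally show ?thesis .
qed

lemma Rh_bound: "emeasure hm (Rh n) \<le> ennreal ((1/2)^n)"
proof -
  let ?x = "Re (qn n)"
  have d: "0 < dl n" "dl n \<le> mm n / 2" by (rule dl_props)+
  have m: "0 < mm n" "mm n \<le> 1" using mm_props by auto
  have "emeasure hm (Rh n) \<le> ennreal ((max 0 ?x + dl n - (min 0 ?x - dl n)) * (1 + dl n - (1 - dl n)) / (mm n / 2)^2)"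
    unfolding Rh_def using d m by (intro box_bound) auto
  also have "\<dots> \<le> ennreal ((1/2)^n)"
  proof (rule ennreal_leI)
    have e: "max 0 ?x + dl n - (min 0 ?x - dl n) = \<bar>?x\<bar> + 2 * dl n" by auto
    show "(max 0 ?x + dl n - (min 0 ?x - dl n)) * (1 + dl n - (1 - dl n)) / (mm n / 2)^2 \<le> (1/2)^n"
      unfolding e using d m by (intro order.trans[OF _ area_arith[of "\<bar>?x\<bar> + 2 * dl n"]]) auto
  qed
  finally show ?thesis .
qed

lemma Rv_bound: "emeasure hm (Rv n) \<le> ennreal ((1/2)^n)"
proof -
  let ?x = "Re (qn n)" and ?y = "Im (qn n)"
  have d: "0 < dl n" "dl n \<le> mm n / 2" by (rule dl_props)+
  have m: "0 < mm n" "mm n \<le> 1" "mm n \<le> ?y" using mm_props by auto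
  have "emeasure hm (Rv n) \<le> ennreal ((?x + dl n - (?x - dl n)) * (max 1 ?y + dl n - (mm n - dl n)) / (mm n / 2)^2)"
    unfolding Rv_def using d m by (intro box_bound) auto
  also have "\<dots> \<le> ennreal ((1/2)^n)"
  proof (rule ennreal_leI)
    have e: "max 1 ?y + dl n - (mm n - dl n) = \<bar>?y - 1\<bar> + 2 * dl n" by (auto simp: mm_def)
    have "(?x + dl n - (?x - dl n)) * (max 1 ?y + dl n - (mm n - dl n)) / (mm n / 2)^2
       = (\<bar>?y - 1\<bar> + 2 * dl n) * (2 * dl n) / (mm n / 2)^2" unfolding e by (simp add: mult.commute)
    also have "\<dots> \<le> (1/2)^n" using d m by (intro area_arith) auto
    finally show "(?x + dl n - (?x - dl n)) * (max 1 ?y + dl n - (mm n - dl n)) / (mm n / 2)^2 \<le> (1/2)^n" .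
  qed
  finally show ?thesis .
qed

lemma F2_borel: "F2 \<in> sets borel"
  unfolding F2_def Rh_def Rv_def by (intro borel_open open_UN open_Un open_box ballI)

lemma F2_area: "hyp_area F2 \<noteq> top"
proof -
  have "hyp_area F2 = emeasure hm (\<Union>n. Rh n \<union> Rv n)"
    using F2_borel by (simp add: hyp_area_eq F2_def)
  also have "\<dots> \<le> (\<Sum>n. emeasure hm (Rh n \<union> Rv n))"
    by (rule emeasure_subadditive_countably) (auto simp: Rh_def Rv_def)
  also have "\<dots> \<le> (\<Sum>n. ennreal (2 * (1/2)^n))"
  proof (intro suminf_le allI)
    fix n
    have "emeasure hm (Rh n \<union> Rv n) \<le> emeasure hm (Rh n) + emeasure hm (Rv n)"
      by (rule emeasure_subadditive) (auto simp: Rh_def Rv_def)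
    also have "\<dots> \<le> ennreal ((1/2)^n) + ennreal ((1/2)^n)"
      by (intro add_mono Rh_bound Rv_bound)
    also have "\<dots> = ennreal (2 * (1/2)^n)" by (simp add: ennreal_plus[symmetric] del: ennreal_plus)
    finally show "emeasure hm (Rh n \<union> Rv n) \<le> ennreal (2 * (1/2)^n)" .
  qed auto
  also have "\<dots> = ennreal (\<Sum>n. 2 * (1/2)^n)"
    by (intro suminf_ennreal2) (auto intro: summable_mult summable_geometric)
  finally show ?thesis by (metis ennreal_neq_top top_unique)
qed


lemma F2_sub: "F2 \<subseteq> upper_half_plane"
proof
  fix z assume "z \<in> F2"
  then obtain n where "z \<in> Rh n \<or> z \<in> Rv n" by (auto simp: F2_def)
  moreover have "0 < dl n" "dl n \<le> mm n / 2" "0 < mm n" "mm n \<le> 1" using dl_props mm_props by auto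
  ultimately show "z \<in> upper_half_plane"
    by (auto simp: Rh_def Rv_def in_box_complex_iff upper_half_plane_def)
qed

lemma F2_open: "open F2"
  unfolding F2_def Rh_def Rv_def by (intro open_UN open_Un open_box ballI)

lemma F2_connected: "connected F2"
proof -
  have "F2 = \<Union>(range (\<lambda>n. Rh n \<union> Rv n))" by (simp add: F2_def)
  moreover have "connected (\<Union>(range (\<lambda>n. Rh n \<union> Rv n)))"
  proof (rule connected_Union)
    fix s assume "s \<in> range (\<lambda>n. Rh n \<union> Rv n)"
    then obtain n where s: "s = Rh n \<union> Rv n" by auto
    have d: "0 < dl n" "dl n \<le> mm n / 2" "0 < mm n" "mm n \<le> 1" "mm n \<le> Im (qn n)"
      using dl_props mm_props by auto
    have "Complex (Re (qn n)) 1 \<in> Rh n \<inter> Rv n" using d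
      by (auto simp: Rh_def Rv_def in_box_complex_iff)
    hence "Rh n \<inter> Rv n \<noteq> {}" by blast
    thus "connected s" unfolding s
      by (intro connected_Un convex_connected) (auto simp: Rh_def Rv_def convex_box)
  next
    have "\<i> \<in> Rh n" for n using dl_props[of n]
      by (auto simp: Rh_def in_box_complex_iff)
    thus "\<Inter>(range (\<lambda>n. Rh n \<union> Rv n)) \<noteq> {}" by blast
  qed
  ultimately show ?thesis by simp
qed

lemma qn_in: "qn n \<in> Rv n"
  using dl_props[of n] mm_props[of n] by (auto simp: Rv_def in_box_complex_iff)

lemma H_closure_F2: "upper_half_plane \<subseteq> closure F2"
proof
  fix z assume z: "z \<in> upper_half_plane"
  have "Dq \<subseteq> F2"
  proof
    fix w assume "w \<in> Dq"
    then obtain n where "w = qn n" using range_qn by blast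
    thus "w \<in> F2" using qn_in[of n] by (auto simp: F2_def)
  qed
  moreover have "z \<in> closure Dq"
    unfolding closure_approachable
  proof (intro allI impI)
    fix e :: real assume e: "e > 0"
    let ?r = "min (e/2) (Im z / 2)"
    have r: "?r > 0" using e z by (simp add: upper_half_plane_def)
    obtain a where a: "a \<in> \<rat>" "Re z < a" "a < Re z + ?r"
      using Rats_dense_in_real[of "Re z" "Re z + ?r"] r by auto
    obtain b where b: "b \<in> \<rat>" "Im z < b" "b < Im z + ?r"
      using Rats_dense_in_real[of "Im z" "Im z + ?r"] r by auto
    have "Complex a b \<in> Dq" using a b z by (simp add: Dq_def upper_half_plane_def)
    moreover have "dist (Complex a b) z < e"
    proof -
      have "dist (Complex a b) z \<le> \<bar>Re (Complex a b - z)\<bar> + \<bar>Im (Complex a b - z)\<bar>"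
        unfolding dist_norm by (rule cmod_le)
      also have "\<dots> < e" using a b by simp
      finally show ?thesis .
    qed
    ultimately show "\<exists>y\<in>Dq. dist y z < e" by blast
  qed
  ultimately show "z \<in> closure F2" using closure_mono by blast
qed

theorem proposition1:
  shows "\<exists>G F1 F2. fuchsian G \<and> fundamental_domain G F1 \<and> fundamental_domain G F2 \<and>
            hyp_area F1 \<noteq> hyp_area F2"
proof (intro exI conjI)
  show "fuchsian G0" by (rule fuchsian_G0)
  show "fundamental_domain G0 upper_half_plane"
    unfolding fundamental_domain_def
  proof (intro conjI ballI impI)
    show "open upper_half_plane" by (simp add: upper_half_plane_def open_halfspace_Im_gt)
    show "connected upper_half_plane"
      by (simp add: upper_half_plane_def convex_connected convex_halfspace_Im_gt)
    fix z assume z: "z \<in> upper_half_plane"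
    show "\<exists>M\<in>G0. mobius M z \<in> closure upper_half_plane \<inter> upper_half_plane"
      using z closure_subset by (intro bexI[of _ "mat 1"]) (auto simp: G0_def mobius_G0)
  qed (auto simp: mobius_G0)
  show "fundamental_domain G0 F2"
    unfolding fundamental_domain_def
  proof (intro conjI ballI impI F2_sub F2_open F2_connected)
    fix z assume z: "z \<in> upper_half_plane"
    show "\<exists>M\<in>G0. mobius M z \<in> closure F2 \<inter> upper_half_plane"
      using z H_closure_F2 by (intro bexI[of _ "mat 1"]) (auto simp: G0_def mobius_G0)
  qed (auto simp: mobius_G0)
  show "hyp_area upper_half_plane \<noteq> hyp_area F2"
    using H_infinite F2_area by simp
qed
end
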